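(* Every transformation $q\mapsto(aq+b)(cq+d)^{-1}$ induced by an invertible matrix $\begin{pmatrix}a&b\\c&d\end{pmatrix}$ with entries in the Hurwitz integers which satisfies the (BG) conditions belongs to the Hurwitz quaternionic modular group $PSL(2,\mathfrak H)$.
   Context: The Hurwitz integers are $\{a+b\mathbf i+c\mathbf j+d\mathbf k: a,b,c,d\in\mathbb Z\text{ or }a,b,c,d\in\mathbb Z+\tfrac12\}$. A quaternionic matrix $A$ satisfies the (BG) conditions if $\bar A^tKA=K$, $K=\begin{pmatrix}0&1\\1&0\end{pmatrix}$, equivalently $\Re(a\bar c)=0$, $\Re(b\bar d)=0$, $\bar bc+\bar da=1$. $PSL(2,\mathfrak H)$ is the group generated by $T(q)=q^{-1}$, the translations $q\mapsto q+\omega$ with $\omega\in\{b\mathbf i+c\mathbf j+d\mathbf k:b,c,d\in\mathbb Z\}$, and the maps $q\mapsto uqu^{-1}$ where $u$ ranges over the 24 Hurwitz units $\pm1,\pm\mathbf i,\pm\mathbf j,\pm\mathbf k,\frac12(\pm1\pm\mathbf i\pm\mathbf j\pm\mathbf k)$. *)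

theory Defs
  imports Main "HOL.Real"
begin

datatype quat = Quat (Re: real) (Im1: real) (Im2: real) (Im3: real)

instantiation quat :: "{zero, one, plus, minus, uminus, times, inverse}"
begin
definition "0 = Quat 0 0 0 0"
definition "1 = Quat 1 0 0 0"
definition "p + q = Quat (Re p + Re q) (Im1 p + Im1 q) (Im2 p + Im2 q) (Im3 p + Im3 q)"
definition "p - q = Quat (Re p - Re q) (Im1 p - Im1 q) (Im2 p - Im2 q) (Im3 p - Im3 q)"
definition "- q = Quat (- Re q) (- Im1 q) (- Im2 q) (- Im3 q)"
definition "p * q = Quat
   (Re p * Re q - Im1 p * Im1 q - Im2 p * Im2 q - Im3 p * Im3 q)
   (Re p * Im1 q + Im1 p * Re q + Im2 p * Im3 q - Im3 p * Im2 q)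
   (Re p * Im2 q - Im1 p * Im3 q + Im2 p * Re q + Im3 p * Im1 q)
   (Re p * Im3 q + Im1 p * Im2 q - Im2 p * Im1 q + Im3 p * Re q)"
definition "inverse q = (let n = (Re q)^2 + (Im1 q)^2 + (Im2 q)^2 + (Im3 q)^2 in
   Quat (Re q / n) (- Im1 q / n) (- Im2 q / n) (- Im3 q / n))"
definition "p div (q::quat) = p * inverse q"
instance ..
end

definition qcnj :: "quat \<Rightarrow> quat" where
  "qcnj q = Quat (Re q) (- Im1 q) (- Im2 q) (- Im3 q)"

definition hurwitz :: "quat set" where
  "hurwitz = {q. (Re q \<in> \<int> \<and> Im1 q \<in> \<int> \<and> Im2 q \<in> \<int> \<and> Im3 q \<in> \<int>) \<or>
                 (Re q - 1/2 \<in> \<int> \<and> Im1 q - 1/2 \<in> \<int> \<and> Im2 q - 1/2 \<in> \<int> \<and> Im3 q - 1/2 \<in> \<int>)}"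

definition hurwitz_units :: "quat set" where
  "hurwitz_units =
     {Quat s 0 0 0 | s. s \<in> {1, -1}} \<union> {Quat 0 s 0 0 | s. s \<in> {1, -1}} \<union>
     {Quat 0 0 s 0 | s. s \<in> {1, -1}} \<union> {Quat 0 0 0 s | s. s \<in> {1, -1}} \<union>
     {Quat a b c d | a b c d. a \<in> {1/2, -1/2} \<and> b \<in> {1/2, -1/2} \<and> c \<in> {1/2, -1/2} \<and> d \<in> {1/2, -1/2}}"

definition transl_vectors :: "quat set" where
  "transl_vectors = {Quat 0 b c d | b c d. b \<in> \<int> \<and> c \<in> \<int> \<and> d \<in> \<int>}"

text \<open>Extended quaternions: None is the point at infinity.\<close>
type_synonym equat = "quat option"

definition mobius :: "quat \<Rightarrow> quat \<Rightarrow> quat \<Rightarrow> quat \<Rightarrow> equat \<Rightarrow> equat" where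
  "mobius a b c d x = (case x of
      None \<Rightarrow> (if c = 0 then None else Some (a * inverse c))
    | Some q \<Rightarrow> (if c * q + d = 0 then None else Some ((a * q + b) * inverse (c * q + d))))"

definition T_map :: "equat \<Rightarrow> equat" where
  "T_map x = (case x of None \<Rightarrow> Some 0 | Some q \<Rightarrow> (if q = 0 then None else Some (inverse q)))"

definition transl_map :: "quat \<Rightarrow> equat \<Rightarrow> equat" where
  "transl_map w x = (case x of None \<Rightarrow> None | Some q \<Rightarrow> Some (q + w))"

definition conj_map :: "quat \<Rightarrow> equat \<Rightarrow> equat" where
  "conj_map u x = (case x of None \<Rightarrow> None | Some q \<Rightarrow> Some (u * q * inverse u))"

inductive_set PSL2H :: "(equat \<Rightarrow> equat) set" where
  gen_T: "T_map \<in> PSL2H"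
| gen_transl: "w \<in> transl_vectors \<Longrightarrow> transl_map w \<in> PSL2H"
| gen_conj: "u \<in> hurwitz_units \<Longrightarrow> conj_map u \<in> PSL2H"
| ident: "id \<in> PSL2H"
| comp: "f \<in> PSL2H \<Longrightarrow> g \<in> PSL2H \<Longrightarrow> f \<circ> g \<in> PSL2H"
| inverse: "f \<in> PSL2H \<Longrightarrow> inv f \<in> PSL2H"

definition qmat_invertible :: "quat \<Rightarrow> quat \<Rightarrow> quat \<Rightarrow> quat \<Rightarrow> bool" where
  "qmat_invertible a b c d \<longleftrightarrow> (\<exists>a' b' c' d'.
      a * a' + b * c' = 1 \<and> a * b' + b * d' = 0 \<and> c * a' + d * c' = 0 \<and> c * b' + d * d' = 1 \<and>
      a' * a + b' * c = 1 \<and> a' * b + b' * d = 0 \<and> c' * a + d' * c = 0 \<and> c' * b + d' * d = 1)"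

text \<open>(BG) conditions: conj(A)^t K A = K with K = [[0,1],[1,0]], written out entrywise.
  Here conj(A)^t = [[conj a, conj c],[conj b, conj d]] and K A = [[c,d],[a,b]].\<close>
definition BG :: "quat \<Rightarrow> quat \<Rightarrow> quat \<Rightarrow> quat \<Rightarrow> bool" where
  "BG a b c d \<longleftrightarrow>
     qcnj a * c + qcnj c * a = 0 \<and> qcnj a * d + qcnj c * b = 1 \<and>
     qcnj b * c + qcnj d * a = 1 \<and> qcnj b * d + qcnj d * b = 0"

end

theory Submission
  imports Defs
begin

lemma quat_eqI: "Re p = Re q \<Longrightarrow> Im1 p = Im1 q \<Longrightarrow> Im2 p = Im2 q \<Longrightarrow> Im3 p = Im3 q \<Longrightarrow> p = q"
  by (cases p; cases q) simp

lemma quat_comps[simp]: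
  "Re 0 = 0" "Im1 0 = 0" "Im2 0 = 0" "Im3 0 = 0"
  "Re 1 = 1" "Im1 1 = 0" "Im2 1 = 0" "Im3 1 = 0"
  "Re (p+q) = Re p + Re q" "Im1 (p+q) = Im1 p + Im1 q" "Im2 (p+q) = Im2 p + Im2 q" "Im3 (p+q) = Im3 p + Im3 q"
  "Re (p-q) = Re p - Re q" "Im1 (p-q) = Im1 p - Im1 q" "Im2 (p-q) = Im2 p - Im2 q" "Im3 (p-q) = Im3 p - Im3 q"
  "Re (-q) = - Re q" "Im1 (-q) = - Im1 q" "Im2 (-q) = - Im2 q" "Im3 (-q) = - Im3 q"
  "Re (p*q) = Re p * Re q - Im1 p * Im1 q - Im2 p * Im2 q - Im3 p * Im3 q"
  "Im1 (p*q) = Re p * Im1 q + Im1 p * Re q + Im2 p * Im3 q - Im3 p * Im2 q"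
  "Im2 (p*q) = Re p * Im2 q - Im1 p * Im3 q + Im2 p * Re q + Im3 p * Im1 q"
  "Im3 (p*q) = Re p * Im3 q + Im1 p * Im2 q - Im2 p * Im1 q + Im3 p * Re q"
  "Re (qcnj q) = Re q" "Im1 (qcnj q) = - Im1 q" "Im2 (qcnj q) = - Im2 q" "Im3 (qcnj q) = - Im3 q"
  by (simp_all add: zero_quat_def one_quat_def plus_quat_def minus_quat_def uminus_quat_def times_quat_def qcnj_def)

definition N :: "quat \<Rightarrow> real" where
  "N q = (Re q)^2 + (Im1 q)^2 + (Im2 q)^2 + (Im3 q)^2"

lemma N_nonneg: "N q \<ge> 0" by (simp add: N_def)

lemma N_zero_iff: "N q = 0 \<longleftrightarrow> q = 0"
proof
  assume "N q = 0"
  then have "Re q = 0 \<and> Im1 q = 0 \<and> Im2 q = 0 \<and> Im3 q = 0"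
    unfolding N_def by (smt (verit) zero_le_power2 power2_less_eq_zero_iff)
  then show "q = 0" by (intro quat_eqI) auto
qed (simp add: N_def)

lemma inverse_comps:
  "Re (inverse q) = Re q / N q" "Im1 (inverse q) = - Im1 q / N q"
  "Im2 (inverse q) = - Im2 q / N q" "Im3 (inverse q) = - Im3 q / N q"
  by (simp_all add: inverse_quat_def N_def Let_def)

instance quat :: division_ring
proof
  fix a b c :: quat
  show "a + b + c = a + (b + c)" by (rule quat_eqI) simp_all
  show "a + b = b + a" by (rule quat_eqI) simp_all
  show "0 + a = a" by (rule quat_eqI) simp_all
  show "- a + a = 0" by (rule quat_eqI) simp_all
  show "a - b = a + - b" by (rule quat_eqI) simp_all
  show "a * b * c = a * (b * c)" by (rule quat_eqI) (simp_all add: algebra_simps)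
  show "1 * a = a" by (rule quat_eqI) simp_all
  show "a * 1 = a" by (rule quat_eqI) simp_all
  show "(a + b) * c = a * c + b * c" by (rule quat_eqI) (simp_all add: algebra_simps)
  show "a * (b + c) = a * b + a * c" by (rule quat_eqI) (simp_all add: algebra_simps)
  show "(0::quat) \<noteq> 1" by (metis quat_comps(1,5) zero_neq_one)
  show "a / b = a * inverse b" by (simp add: divide_quat_def)
  show "inverse (0::quat) = 0" by (rule quat_eqI) (simp_all add: inverse_comps N_def)
next
  fix a :: quat assume "a \<noteq> 0"
  then have n: "N a \<noteq> 0" using N_zero_iff by blast
  have e: "(Re a * Re a + Im1 a * Im1 a + Im2 a * Im2 a + Im3 a * Im3 a) / N a = 1"
    using n by (simp add: N_def power2_eq_square)
  show "inverse a * a = 1"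
  proof (rule quat_eqI)
    have "Re (inverse a * a) = (Re a * Re a + Im1 a * Im1 a + Im2 a * Im2 a + Im3 a * Im3 a) / N a"
      unfolding quat_comps inverse_comps by (simp add: add_divide_distrib diff_divide_distrib)
    then show "Re (inverse a * a) = Re 1" using e by simp
    show "Im1 (inverse a * a) = Im1 1" unfolding quat_comps inverse_comps by (simp add: field_simps)
    show "Im2 (inverse a * a) = Im2 1" unfolding quat_comps inverse_comps by (simp add: field_simps)
    show "Im3 (inverse a * a) = Im3 1" unfolding quat_comps inverse_comps by (simp add: field_simps)
  qed
  show "a * inverse a = 1"
  proof (rule quat_eqI)
    have "Re (a * inverse a) = (Re a * Re a + Im1 a * Im1 a + Im2 a * Im2 a + Im3 a * Im3 a) / N a"
      unfolding quat_comps inverse_comps by (simp add: add_divide_distrib diff_divide_distrib mult.commute)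
    then show "Re (a * inverse a) = Re 1" using e by simp
    show "Im1 (a * inverse a) = Im1 1" unfolding quat_comps inverse_comps by (simp add: field_simps)
    show "Im2 (a * inverse a) = Im2 1" unfolding quat_comps inverse_comps by (simp add: field_simps)
    show "Im3 (a * inverse a) = Im3 1" unfolding quat_comps inverse_comps by (simp add: field_simps)
  qed
qed

lemma qcnj_mult: "qcnj (p*q) = qcnj q * qcnj p"
  by (rule quat_eqI) (simp_all add: algebra_simps)
lemma qcnj_add: "qcnj (p+q) = qcnj p + qcnj q" by (rule quat_eqI) simp_all
lemma qcnj_0[simp]: "qcnj 0 = 0" by (rule quat_eqI) simp_all
lemma qcnj_1[simp]: "qcnj 1 = 1" by (rule quat_eqI) simp_all
lemma qcnj_qcnj[simp]: "qcnj (qcnj q) = q" by (rule quat_eqI) simp_all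
lemma N_mult: "N (p*q) = N p * N q"
  unfolding N_def by (simp add: power2_eq_square algebra_simps)
lemma N_qcnj: "N (qcnj q) = N q" unfolding N_def by simp
lemma cnj_self: "qcnj q * q = Quat (N q) 0 0 0"
  by (rule quat_eqI) (simp_all add: N_def power2_eq_square algebra_simps)
lemma self_cnj: "q * qcnj q = Quat (N q) 0 0 0"
  by (rule quat_eqI) (simp_all add: N_def power2_eq_square algebra_simps)
lemma one_Quat: "Quat 1 0 0 0 = 1" by (rule quat_eqI) simp_all
lemma N1_inverse: "N q = 1 \<Longrightarrow> inverse q = qcnj q"
  by (rule quat_eqI) (simp_all add: inverse_comps)

definition lip :: "quat set" where
  "lip = {q. Re q \<in> \<int> \<and> Im1 q \<in> \<int> \<and> Im2 q \<in> \<int> \<and> Im3 q \<in> \<int>}"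
definition hh :: quat where "hh = Quat (1/2) (1/2) (1/2) (1/2)"

lemma hurwitz_lip: "q \<in> hurwitz \<longleftrightarrow> q \<in> lip \<or> q - hh \<in> lip"
  by (simp add: hurwitz_def lip_def hh_def)

lemma lip_add: "p \<in> lip \<Longrightarrow> q \<in> lip \<Longrightarrow> p + q \<in> lip"
  by (simp add: lip_def)
lemma lip_minus: "p \<in> lip \<Longrightarrow> - p \<in> lip"
  by (simp add: lip_def)
lemma lip_mult: "p \<in> lip \<Longrightarrow> q \<in> lip \<Longrightarrow> p * q \<in> lip"
  by (simp add: lip_def)
lemma lip_0: "0 \<in> lip" by (simp add: lip_def)

lemma lip_hurwitz: "p \<in> lip \<Longrightarrow> p \<in> hurwitz" by (simp add: hurwitz_lip)

lemma hurwitz_add: assumes "p \<in> hurwitz" "q \<in> hurwitz" shows "p + q \<in> hurwitz"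
proof -
  have hh2: "hh + hh - 1 \<in> lip" by (simp add: hh_def lip_def)
  show ?thesis using assms unfolding hurwitz_lip
  proof (elim disjE)
    assume "p - hh \<in> lip" "q - hh \<in> lip"
    then have "(p - hh) + (q - hh) + (hh + hh - 1) + 1 \<in> lip"
      by (intro lip_add \<open>p - hh \<in> lip\<close> \<open>q - hh \<in> lip\<close> hh2) (simp add: lip_def)
    then show "p + q \<in> lip \<or> p + q - hh \<in> lip" by (simp add: algebra_simps)
  next
    assume "p \<in> lip" "q - hh \<in> lip"
    then have "p + (q - hh) \<in> lip" by (rule lip_add)
    then show "p + q \<in> lip \<or> p + q - hh \<in> lip" by (simp add: algebra_simps)
  next
    assume "p - hh \<in> lip" "q \<in> lip"
    then have "(p - hh) + q \<in> lip" by (rule lip_add)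
    then show "p + q \<in> lip \<or> p + q - hh \<in> lip" by (simp add: algebra_simps)
  qed (simp add: lip_add)
qed

lemma half_hurwitz:
  fixes m0 m1 m2 m3 :: int
  assumes "even (m1 - m0)" "even (m2 - m0)" "even (m3 - m0)"
  shows "Quat (of_int m0/2) (of_int m1/2) (of_int m2/2) (of_int m3/2) \<in> hurwitz"
proof (cases "even m0")
  case True
  then have "even m1" "even m2" "even m3" using assms by presburger+
  with True obtain k0 k1 k2 k3 where "m0 = 2*k0" "m1 = 2*k1" "m2 = 2*k2" "m3 = 2*k3"
    by (meson evenE)
  then show ?thesis by (simp add: hurwitz_def)
next
  case False
  then have "odd m1" "odd m2" "odd m3" using assms by presburger+
  with False obtain k0 k1 k2 k3 where "m0 = 2*k0+1" "m1 = 2*k1+1" "m2 = 2*k2+1" "m3 = 2*k3+1"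
    by (meson oddE)
  then show ?thesis by (simp add: hurwitz_def add_divide_distrib)
qed

lemma lip_obtain:
  assumes "x \<in> lip"
  obtains n0 n1 n2 n3 :: int where "x = Quat (of_int n0) (of_int n1) (of_int n2) (of_int n3)"
proof -
  from assms obtain n0 n1 n2 n3 where "Re x = of_int n0" "Im1 x = of_int n1" "Im2 x = of_int n2" "Im3 x = of_int n3"
    unfolding lip_def by (auto elim!: Ints_cases)
  then show ?thesis using that by (cases x) simp
qed

lemma lip_times_hh: assumes "x \<in> lip" shows "x * hh \<in> hurwitz"
proof -
  obtain n0 n1 n2 n3 :: int where x: "x = Quat (of_int n0) (of_int n1) (of_int n2) (of_int n3)"
    using assms lip_obtain by blast
  have "x * hh = Quat (of_int (n0-n1-n2-n3)/2) (of_int (n0+n1+n2-n3)/2) (of_int (n0-n1+n2+n3)/2) (of_int (n0+n1-n2+n3)/2)"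
    unfolding x hh_def by (rule quat_eqI) (simp_all add: field_simps)
  also have "\<dots> \<in> hurwitz" by (rule half_hurwitz) presburger+
  finally show ?thesis .
qed

lemma hh_times_lip: assumes "x \<in> lip" shows "hh * x \<in> hurwitz"
proof -
  obtain n0 n1 n2 n3 :: int where x: "x = Quat (of_int n0) (of_int n1) (of_int n2) (of_int n3)"
    using assms lip_obtain by blast
  have "hh * x = Quat (of_int (n0-n1-n2-n3)/2) (of_int (n0+n1-n2+n3)/2) (of_int (n0+n1+n2-n3)/2) (of_int (n0-n1+n2+n3)/2)"
    unfolding x hh_def by (rule quat_eqI) (simp_all add: field_simps)
  also have "\<dots> \<in> hurwitz" by (rule half_hurwitz) presburger+
  finally show ?thesis .
qed

lemma hh_hh: "hh * hh \<in> hurwitz"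
proof -
  have "hh * hh = Quat (of_int (-1)/2) (of_int 1/2) (of_int 1/2) (of_int 1/2)"
    unfolding hh_def by (rule quat_eqI) simp_all
  also have "\<dots> \<in> hurwitz" by (rule half_hurwitz) presburger+
  finally show ?thesis .
qed

lemma hurwitz_mult: assumes "p \<in> hurwitz" "q \<in> hurwitz" shows "p * q \<in> hurwitz"
proof -
  obtain p' e where p: "p' \<in> lip" "p = p' + e" "e = 0 \<or> e = hh"
    using assms(1) unfolding hurwitz_lip by (metis add.right_neutral diff_add_cancel)
  obtain q' f where q: "q' \<in> lip" "q = q' + f" "f = 0 \<or> f = hh"
    using assms(2) unfolding hurwitz_lip by (metis add.right_neutral diff_add_cancel)
  have "p * q = p' * q' + p' * f + e * q' + e * f" by (simp add: p q algebra_simps)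
  moreover have "p' * q' \<in> hurwitz" by (simp add: lip_hurwitz lip_mult p q)
  moreover have "p' * f \<in> hurwitz" using q(3) lip_times_hh p(1) by (auto simp: hurwitz_lip lip_0)
  moreover have "e * q' \<in> hurwitz" using p(3) hh_times_lip q(1) by (auto simp: hurwitz_lip lip_0)
  moreover have "e * f \<in> hurwitz" using p(3) q(3) hh_hh by (auto simp: hurwitz_lip lip_0)
  ultimately show ?thesis by (simp add: hurwitz_add)
qed

lemma hurwitz_uminus: "p \<in> hurwitz \<Longrightarrow> - p \<in> hurwitz"
proof -
  assume "p \<in> hurwitz"
  moreover have "- 1 \<in> hurwitz" by (simp add: hurwitz_lip lip_def)
  ultimately have "(-1) * p \<in> hurwitz" by (rule hurwitz_mult[rotated])
  then show ?thesis by simp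
qed

lemma hurwitz_qcnj: "p \<in> hurwitz \<Longrightarrow> qcnj p \<in> hurwitz"
proof -
  have m: "x - 1/2 \<in> \<int> \<Longrightarrow> - x - 1/2 \<in> \<int>" for x :: real
  proof -
    assume "x - 1/2 \<in> \<int>"
    then have "- (x - 1/2) - 1 \<in> \<int>" using Ints_diff Ints_minus Ints_1 by blast
    moreover have "- (x - 1/2) - 1 = - x - 1/2" by simp
    ultimately show ?thesis by metis
  qed
  assume "p \<in> hurwitz" then show ?thesis unfolding hurwitz_def using m by auto
qed

lemma hurwitz_cases:
  assumes "q \<in> hurwitz"
  obtains (int) n0 n1 n2 n3 :: int where "q = Quat (of_int n0) (of_int n1) (of_int n2) (of_int n3)"
  | (half) n0 n1 n2 n3 :: int where "q = Quat (of_int n0 + 1/2) (of_int n1 + 1/2) (of_int n2 + 1/2) (of_int n3 + 1/2)"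
proof -
  consider "q \<in> lip" | "q - hh \<in> lip" using assms hurwitz_lip by blast
  then show ?thesis
  proof cases
    case 1 then show ?thesis using lip_obtain that(1) by blast
  next
    case 2
    then obtain n0 n1 n2 n3 :: int where x: "q - hh = Quat (of_int n0) (of_int n1) (of_int n2) (of_int n3)"
      using lip_obtain by blast
    have "q = (q - hh) + hh" by simp
    also have "\<dots> = Quat (of_int n0 + 1/2) (of_int n1 + 1/2) (of_int n2 + 1/2) (of_int n3 + 1/2)"
      unfolding x by (rule quat_eqI) (simp_all add: hh_def)
    finally show ?thesis using that(2) by blast
  qed
qed

lemma sq_half: "(of_int n + 1/2::real)^2 = of_int ((2*n+1)^2) / 4"
  by (simp add: power2_eq_square field_simps)

lemma hurwitz_4N: assumes "q \<in> hurwitz" shows "4 * N q \<in> \<int>"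
  using assms
proof (cases rule: hurwitz_cases)
  case (int n0 n1 n2 n3) then show ?thesis by (simp add: N_def)
next
  case (half n0 n1 n2 n3)
  then have "4 * N q = of_int ((2*n0+1)^2 + (2*n1+1)^2 + (2*n2+1)^2 + (2*n3+1)^2)"
    by (simp add: N_def sq_half)
  then show ?thesis by simp
qed

lemma hurwitz_N_ge1: assumes "q \<in> hurwitz" "q \<noteq> 0" shows "N q \<ge> 1"
  using assms(1)
proof (cases rule: hurwitz_cases)
  case (int n0 n1 n2 n3)
  then have ne: "n0 \<noteq> 0 \<or> n1 \<noteq> 0 \<or> n2 \<noteq> 0 \<or> n3 \<noteq> 0" using assms(2) by (auto simp: zero_quat_def)
  have "n0^2 + n1^2 + n2^2 + n3^2 \<ge> 1"
  proof -
    have p: "n \<noteq> 0 \<Longrightarrow> n^2 \<ge> (1::int)" for n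
    proof -
      assume "n \<noteq> 0" then have "n^2 > 0" by simp
      then show ?thesis by linarith
    qed
    have z: "n^2 \<ge> (0::int)" for n by simp
    show ?thesis using ne p[of n0] p[of n1] p[of n2] p[of n3] z[of n0] z[of n1] z[of n2] z[of n3] by linarith
  qed
  then have "real_of_int (n0^2 + n1^2 + n2^2 + n3^2) \<ge> 1" by linarith
  then show ?thesis using int by (simp add: N_def)
next
  case (half n0 n1 n2 n3)
  have o: "(2*n+1)^2 \<ge> (1::int)" for n
  proof -
    have "2*n+1 \<noteq> 0" by presburger
    then have "(2*n+1)^2 > 0" by simp
    then show ?thesis by linarith
  qed
  have "4 * N q = of_int ((2*n0+1)^2 + (2*n1+1)^2 + (2*n2+1)^2 + (2*n3+1)^2)"
    using half by (simp add: N_def sq_half)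
  moreover have "(2*n0+1)^2 + (2*n1+1)^2 + (2*n2+1)^2 + (2*n3+1)^2 \<ge> 4" using o[of n0] o[of n1] o[of n2] o[of n3] by linarith
  ultimately show ?thesis by linarith
qed

lemma int_sq_le1: "(n::int)^2 \<le> 1 \<Longrightarrow> n = -1 \<or> n = 0 \<or> n = 1"
  using abs_square_le_1[of n] by auto

lemma hurwitz_unit: assumes "q \<in> hurwitz" "N q = 1" shows "q \<in> hurwitz_units"
  using assms(1)
proof (cases rule: hurwitz_cases)
  case (int n0 n1 n2 n3)
  have "real_of_int (n0^2 + n1^2 + n2^2 + n3^2) = 1"
    using assms(2) int unfolding N_def by simp
  then have s: "n0^2 + n1^2 + n2^2 + n3^2 = 1" by (simp only: of_int_eq_1_iff)
  have z: "n^2 \<ge> (0::int)" for n by simp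
  have p: "n \<noteq> 0 \<Longrightarrow> n^2 \<ge> (1::int)" for n
  proof -
    assume "n \<noteq> 0" then have "n^2 > 0" by simp
    then show ?thesis by linarith
  qed
  have sq1: "n^2 = (1::int) \<Longrightarrow> n = 1 \<or> n = -1" for n
    using abs_square_eq_1[of n] by auto
  have U: "Quat s 0 0 0 \<in> hurwitz_units" "Quat 0 s 0 0 \<in> hurwitz_units"
     "Quat 0 0 s 0 \<in> hurwitz_units" "Quat 0 0 0 s \<in> hurwitz_units" if "s = 1 \<or> s = -1" for s
    using that unfolding hurwitz_units_def by blast+
  consider "n0 \<noteq> 0" | "n1 \<noteq> 0" | "n2 \<noteq> 0" | "n3 \<noteq> 0" | "n0 = 0 \<and> n1 = 0 \<and> n2 = 0 \<and> n3 = 0" by blast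
  then show ?thesis
  proof cases
    case 1
    then have "n1^2 = 0" "n2^2 = 0" "n3^2 = 0" "n0^2 = 1"
      using s p[of n0] z[of n1] z[of n2] z[of n3] by linarith+
    then have "n1 = 0" "n2 = 0" "n3 = 0" "n0^2 = 1" by simp_all
    then show ?thesis using sq1[of n0] U(1)[of "of_int n0"] int by auto
  next
    case 2
    then have "n0^2 = 0" "n2^2 = 0" "n3^2 = 0" "n1^2 = 1"
      using s p[of n1] z[of n0] z[of n2] z[of n3] by linarith+
    then have "n0 = 0" "n2 = 0" "n3 = 0" "n1^2 = 1" by simp_all
    then show ?thesis using sq1[of n1] U(2)[of "of_int n1"] int by auto
  next
    case 3
    then have "n0^2 = 0" "n1^2 = 0" "n3^2 = 0" "n2^2 = 1"
      using s p[of n2] z[of n0] z[of n1] z[of n3] by linarith+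
    then have "n0 = 0" "n1 = 0" "n3 = 0" "n2^2 = 1" by simp_all
    then show ?thesis using sq1[of n2] U(3)[of "of_int n2"] int by auto
  next
    case 4
    then have "n0^2 = 0" "n1^2 = 0" "n2^2 = 0" "n3^2 = 1"
      using s p[of n3] z[of n0] z[of n1] z[of n2] by linarith+
    then have "n0 = 0" "n1 = 0" "n2 = 0" "n3^2 = 1" by simp_all
    then show ?thesis using sq1[of n3] U(4)[of "of_int n3"] int by auto
  next
    case 5 then show ?thesis using s by simp
  qed
next
  case (half n0 n1 n2 n3)
  have o: "(2*n+1)^2 \<ge> (1::int)" for n
  proof -
    have "2*n+1 \<noteq> 0" by presburger
    then have "(2*n+1)^2 > 0" by simp
    then show ?thesis by linarith
  qed
  have "4 * N q = of_int ((2*n0+1)^2 + (2*n1+1)^2 + (2*n2+1)^2 + (2*n3+1)^2)"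
    using half by (simp add: N_def sq_half)
  then have "of_int ((2*n0+1)^2 + (2*n1+1)^2 + (2*n2+1)^2 + (2*n3+1)^2) = (4::real)" using assms(2)
    by simp
  then have s: "(2*n0+1)^2 + (2*n1+1)^2 + (2*n2+1)^2 + (2*n3+1)^2 = 4"
    by (simp only: of_int_eq_numeral_iff)
  have e: "(2*n+1)^2 = (1::int) \<Longrightarrow> n = 0 \<or> n = -1" for n
    using abs_square_eq_1[of "2*n+1"] by auto
  have "(2*n0+1)^2 = 1" "(2*n1+1)^2 = 1" "(2*n2+1)^2 = 1" "(2*n3+1)^2 = 1"
    using s o[of n0] o[of n1] o[of n2] o[of n3] by linarith+
  then have h: "of_int n0 + 1/2 \<in> {1/2, -1/2::real}" "of_int n1 + 1/2 \<in> {1/2, -1/2::real}"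
    "of_int n2 + 1/2 \<in> {1/2, -1/2::real}" "of_int n3 + 1/2 \<in> {1/2, -1/2::real}"
    using e by fastforce+
  show ?thesis unfolding half hurwitz_units_def
    apply (rule UnI2)
    using h by blast
qed

lemma hurwitz_pure: assumes "q \<in> hurwitz" "Re q = 0" shows "q \<in> transl_vectors"
  using assms(1)
proof (cases rule: hurwitz_cases)
  case (int n0 n1 n2 n3)
  then show ?thesis using assms(2) unfolding transl_vectors_def by auto
next
  case (half n0 n1 n2 n3)
  then have "of_int n0 + 1/2 = (0::real)" using assms(2) by simp
  then have "of_int (2*n0 + 1) = (0::real)" by simp
  then have "2*n0+1 = 0" by (simp only: of_int_eq_0_iff)
  then have False by presburger
  then show ?thesis ..
qed

lemma transl_hurwitz: "w \<in> transl_vectors \<Longrightarrow> w \<in> hurwitz"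
  unfolding transl_vectors_def hurwitz_def by auto

lemma transl_minus: "w \<in> transl_vectors \<Longrightarrow> - w \<in> transl_vectors"
  unfolding transl_vectors_def by (auto simp: uminus_quat_def)

lemma transl_cnj: "w \<in> transl_vectors \<Longrightarrow> qcnj w = - w"
  unfolding transl_vectors_def by (auto simp: uminus_quat_def qcnj_def)

lemma round_sq: "(y - of_int \<lfloor>y + 1/2\<rfloor>)^2 \<le> (1/4::real)"
proof -
  have "of_int \<lfloor>y + 1/2\<rfloor> \<le> y + 1/2" "y + 1/2 < of_int \<lfloor>y + 1/2\<rfloor> + 1" by linarith+
  then have "\<bar>y - of_int \<lfloor>y + 1/2\<rfloor>\<bar> \<le> 1/2" by linarith
  then have "\<bar>y - of_int \<lfloor>y + 1/2\<rfloor>\<bar>^2 \<le> (1/2)^2" by (intro power_mono) auto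
  then show ?thesis by (simp add: power2_eq_square)
qed

lemma rounding: assumes "Re x = 0"
  shows "\<exists>w \<in> transl_vectors. N (x + w) \<le> 3/4"
proof -
  let ?r = "\<lambda>y::real. of_int \<lfloor>y + 1/2\<rfloor> :: real"
  define w where "w = Quat 0 (- ?r (Im1 x)) (- ?r (Im2 x)) (- ?r (Im3 x))"
  have "w \<in> transl_vectors" unfolding w_def transl_vectors_def by auto
  moreover have "N (x + w) \<le> 3/4"
    using round_sq[of "Im1 x"] round_sq[of "Im2 x"] round_sq[of "Im3 x"] assms
    unfolding N_def w_def by simp
  ultimately show ?thesis by blast
qed



lemma BG_swap: "BG a b c d \<Longrightarrow> BG c d a b"
  unfolding BG_def by (simp add: add.commute)

lemma BG_transl:
  assumes w: "w \<in> transl_vectors" and bg: "BG a b c d"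
  shows "BG (a + w*c) (b + w*d) c d"
proof -
  have cw: "qcnj w = - w" using transl_cnj[OF w] .
  have cA: "qcnj (a + w*c) = qcnj a - qcnj c * w" by (simp add: qcnj_add qcnj_mult cw)
  have cB: "qcnj (b + w*d) = qcnj b - qcnj d * w" by (simp add: qcnj_add qcnj_mult cw)
  from bg have e1: "qcnj a * c + qcnj c * a = 0" and e2: "qcnj a * d + qcnj c * b = 1"
    and e3: "qcnj b * c + qcnj d * a = 1" and e4: "qcnj b * d + qcnj d * b = 0"
    unfolding BG_def by auto
  have "(qcnj a - qcnj c * w) * c + qcnj c * (a + w*c) = qcnj a * c + qcnj c * a"
    by (simp add: algebra_simps)
  moreover have "(qcnj a - qcnj c * w) * d + qcnj c * (b + w*d) = qcnj a * d + qcnj c * b"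
    by (simp add: algebra_simps)
  moreover have "(qcnj b - qcnj d * w) * c + qcnj d * (a + w*c) = qcnj b * c + qcnj d * a"
    by (simp add: algebra_simps)
  moreover have "(qcnj b - qcnj d * w) * d + qcnj d * (b + w*d) = qcnj b * d + qcnj d * b"
    by (simp add: algebra_simps)
  ultimately show ?thesis unfolding BG_def cA cB using e1 e2 e3 e4 by simp
qed

lemma nondegen:
  assumes bg: "BG a b c d" and h1: "a*q+b = 0" and h2: "c*q+d = 0"
  shows False
proof -
  from bg have e2: "qcnj a * d + qcnj c * b = 1"
    and e3: "qcnj b * c + qcnj d * a = 1" and e4: "qcnj b * d + qcnj d * b = 0"
    unfolding BG_def by auto
  have "qcnj d * (a*q+b) + qcnj b * (c*q+d) = (qcnj b * c + qcnj d * a) * q + (qcnj b * d + qcnj d * b)"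
    by (simp add: algebra_simps)
  then have "q = 0" using h1 h2 e3 e4 by simp
  then have "b = 0" "d = 0" using h1 h2 by simp_all
  then show False using e2 by simp
qed

lemma Re_pure:
  assumes bg: "BG a b c d"
  shows "Re (a * inverse c) = 0"
proof -
  from bg have "Re (qcnj a * c + qcnj c * a) = 0" unfolding BG_def by simp
  then have "Re a * Re c + Im1 a * Im1 c + Im2 a * Im2 c + Im3 a * Im3 c = 0" by simp
  moreover have "Re (a * inverse c) = (Re a * Re c + Im1 a * Im1 c + Im2 a * Im2 c + Im3 a * Im3 c) / N c"
    unfolding quat_comps inverse_comps by (simp add: add_divide_distrib diff_divide_distrib)
  ultimately show ?thesis by simp
qed

lemma base_case:
  assumes ha: "a \<in> hurwitz" and hb: "b \<in> hurwitz" and hd: "d \<in> hurwitz" and bg: "BG a b 0 d"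
  shows "mobius a b 0 d \<in> PSL2H"
proof -
  from bg have e2: "qcnj a * d = 1" and e4: "qcnj b * d + qcnj d * b = 0"
    unfolding BG_def by auto
  have a0: "a \<noteq> 0" using e2 by auto
  have d0: "d \<noteq> 0" using e2 by auto
  have "N (qcnj a * d) = 1" using e2 by (simp add: N_def)
  then have nn: "N a * N d = 1" by (simp add: N_mult N_qcnj)
  have "N a \<ge> 1" "N d \<ge> 1" using hurwitz_N_ge1 ha hd a0 d0 by auto
  moreover have "N a * 1 \<le> N a * N d" using \<open>N d \<ge> 1\<close> \<open>N a \<ge> 1\<close> by (intro mult_left_mono) auto
  ultimately have Na: "N a = 1" using nn by linarith
  have ca: "qcnj a * a = 1" using cnj_self[of a] Na one_Quat by simp
  have qa0: "qcnj a \<noteq> 0" using ca by auto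
  have "qcnj a * d = qcnj a * a" using e2 ca by simp
  then have da: "d = a" using qa0 by simp
  have unit: "a \<in> hurwitz_units" using hurwitz_unit ha Na by blast
  define w where "w = b * qcnj a"
  have wh: "w \<in> hurwitz" unfolding w_def using hb ha by (simp add: hurwitz_mult hurwitz_qcnj)
  have "Re (qcnj b * a + qcnj a * b) = 0" using e4 da by simp
  then have "Re w = 0" unfolding w_def by (simp add: algebra_simps)
  then have wt: "w \<in> transl_vectors" using hurwitz_pure wh by blast
  have ia: "inverse a = qcnj a" using N1_inverse Na by blast
  have "mobius a b 0 d = transl_map w \<circ> conj_map a"
  proof
    fix x show "mobius a b 0 d x = (transl_map w \<circ> conj_map a) x"
    proof (cases x)
      case None then show ?thesis by (simp add: mobius_def transl_map_def conj_map_def)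
    next
      case (Some q)
      have "(a * q + b) * inverse a = a * q * inverse a + w" unfolding w_def ia by (simp add: distrib_right)
      then show ?thesis using a0 da Some
        by (simp add: mobius_def transl_map_def conj_map_def)
    qed
  qed
  also have "\<dots> \<in> PSL2H" using wt unit by (intro PSL2H.comp PSL2H.gen_transl PSL2H.gen_conj)
  finally show ?thesis .
qed

lemma step_eq:
  assumes c0: "c \<noteq> 0" and bg: "BG a b c d"
  shows "mobius a b c d = transl_map (- w) \<circ> (T_map \<circ> mobius c d (a + w*c) (b + w*d))"
proof
  fix x
  let ?a = "a + w*c" and ?b = "b + w*d"
  show "mobius a b c d x = (transl_map (- w) \<circ> (T_map \<circ> mobius c d ?a ?b)) x"
  proof (cases x)
    case None
    show ?thesis
    proof (cases "?a = 0")
      case True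
      then have "a = - (w*c)" by (simp add: eq_neg_iff_add_eq_0)
      then have "a * inverse c = - w" using c0 by (simp add: mult.assoc)
      then show ?thesis using None True c0 by (simp add: mobius_def T_map_def transl_map_def)
    next
      case False
      have ne: "c * inverse ?a \<noteq> 0" using False c0 by simp
      have inv: "inverse (c * inverse ?a) = ?a * inverse c"
        using False c0 by (simp add: nonzero_inverse_mult_distrib)
      have "?a * inverse c + - w = a * inverse c" using c0 by (simp add: distrib_right mult.assoc)
      then show ?thesis using None False c0 ne inv by (simp add: mobius_def T_map_def transl_map_def)
    qed
  next
    case (Some q)
    have key: "?a * q + ?b = (a*q+b) + w*(c*q+d)" by (simp add: algebra_simps)
    consider "c*q+d = 0" | "c*q+d \<noteq> 0" "?a * q + ?b = 0" | "c*q+d \<noteq> 0" "?a * q + ?b \<noteq> 0" by blast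
    then show ?thesis
    proof cases
      case 1
      have "a*q+b \<noteq> 0" using nondegen[OF bg _ 1] by blast
      moreover have "?a * q + ?b = a*q+b" unfolding key 1 by simp
      ultimately have "?a * q + ?b \<noteq> 0" by metis
      then show ?thesis using Some 1 by (simp add: mobius_def T_map_def transl_map_def)
    next
      case 2
      then have "a*q+b = - (w*(c*q+d))" using key by (simp add: eq_neg_iff_add_eq_0)
      then have "(a*q+b) * inverse (c*q+d) = - w" using 2 by (simp add: mult.assoc)
      then show ?thesis using Some 2 by (simp add: mobius_def T_map_def transl_map_def)
    next
      case 3
      have ne: "(c*q+d) * inverse (?a * q + ?b) \<noteq> 0" using 3 by simp
      have inv: "inverse ((c*q+d) * inverse (?a * q + ?b)) = (?a * q + ?b) * inverse (c*q+d)"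
        using 3 by (simp add: nonzero_inverse_mult_distrib)
      have ww: "w*(c*q+d)*inverse(c*q+d) = w" using 3 by (simp add: mult.assoc)
      have "(?a * q + ?b) * inverse (c*q+d) + - w = (a*q+b)*inverse(c*q+d) + w*(c*q+d)*inverse(c*q+d) + - w"
        unfolding key by (simp only: distrib_right)
      also have "\<dots> = (a*q+b) * inverse (c*q+d)" unfolding ww by simp
      finally have "(?a * q + ?b) * inverse (c*q+d) + - w = (a*q+b) * inverse (c*q+d)" .
      then show ?thesis using Some 3 ne inv by (simp add: mobius_def T_map_def transl_map_def)
    qed
  qed
qed

lemma main_ind:
  "\<forall>a b c d. a \<in> hurwitz \<longrightarrow> b \<in> hurwitz \<longrightarrow> c \<in> hurwitz \<longrightarrow> d \<in> hurwitz \<longrightarrow> BG a b c d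
     \<longrightarrow> nat \<lfloor>4 * N c\<rfloor> = n \<longrightarrow> mobius a b c d \<in> PSL2H"
proof (induction n rule: less_induct)
  case (less n)
  show ?case
  proof (intro allI impI)
    fix a b c d
    assume ha: "a \<in> hurwitz" and hb: "b \<in> hurwitz" and hc: "c \<in> hurwitz" and hd: "d \<in> hurwitz"
      and bg: "BG a b c d" and n: "nat \<lfloor>4 * N c\<rfloor> = n"
    show "mobius a b c d \<in> PSL2H"
    proof (cases "c = 0")
      case True then show ?thesis using base_case ha hb hd bg by blast
    next
      case c0: False
      have "Re (a * inverse c) = 0" using Re_pure bg .
      then obtain w where wt: "w \<in> transl_vectors" and wN: "N (a * inverse c + w) \<le> 3/4"
        using rounding by blast
      define a' where "a' = a + w*c"
      define b' where "b' = b + w*d"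
      have ha': "a' \<in> hurwitz" unfolding a'_def
        using ha hc wt by (simp add: hurwitz_add hurwitz_mult transl_hurwitz)
      have hb': "b' \<in> hurwitz" unfolding b'_def
        using hb hd wt by (simp add: hurwitz_add hurwitz_mult transl_hurwitz)
      have bg': "BG c d a' b'" unfolding a'_def b'_def using BG_transl[OF wt bg] by (rule BG_swap)
      have "a' = (a * inverse c + w) * c" unfolding a'_def using c0 by (simp add: distrib_right mult.assoc)
      then have "N a' = N (a * inverse c + w) * N c" by (simp add: N_mult)
      also have "\<dots> \<le> 3/4 * N c" using wN N_nonneg[of c] by (rule mult_right_mono)
      also have "\<dots> < N c" using c0 N_zero_iff[of c] N_nonneg[of c] by simp
      finally have lt: "4 * N a' < 4 * N c" by simp
      obtain k where k: "4 * N a' = of_int k" using hurwitz_4N[OF ha'] by (auto elim: Ints_cases)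
      obtain l where l: "4 * N c = of_int l" using hurwitz_4N[OF hc] by (auto elim: Ints_cases)
      have "real_of_int k < real_of_int l" using lt k l by simp
      then have "k < l" by simp
      have "real_of_int k \<ge> 0" using k N_nonneg[of a'] by simp
      then have "0 \<le> k" by simp
      note \<open>k < l\<close> this
      then have "nat \<lfloor>4 * N a'\<rfloor> < n" unfolding n[symmetric] k l by simp
      then have IH: "mobius c d a' b' \<in> PSL2H" using less ha' hb' hc hd bg' by blast
      have "mobius a b c d = transl_map (- w) \<circ> (T_map \<circ> mobius c d a' b')"
        unfolding a'_def b'_def using c0 bg by (rule step_eq)
      also have "\<dots> \<in> PSL2H" using IH transl_minus[OF wt]
        by (intro PSL2H.comp PSL2H.gen_T PSL2H.gen_transl)
      finally show ?thesis .
    qed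
  qed
qed

theorem mainTheorem11:
  assumes "a \<in> hurwitz" "b \<in> hurwitz" "c \<in> hurwitz" "d \<in> hurwitz"
    and "qmat_invertible a b c d"
    and "BG a b c d"
  shows "mobius a b c d \<in> PSL2H"
  using main_ind assms by blast

end
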